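(* Let $p$ be a positive integer, let $\lambda$ be a partition all of whose parts are multiples of $p$, and let $\lambda^c$ be the conjugate partition of $\lambda$. Then every maximal run of consecutive integers contained in the set $\beta(\lambda^c)$ has length divisible by $p$.
   Context: For a partition $\mu$, its $\beta$-set $\beta(\mu)$ is the set of hook lengths of the boxes in the first column of the Young diagram of $\mu$, where the hook length of a box is the number of boxes consisting of the box itself, the boxes directly to its right, and the boxes directly below it. Equivalently, if $\mu=(\mu_1,\dots,\mu_m)$ with $\mu_m>0$, then $\beta(\mu)=\{\mu_i+m-i : 1\le i\le m\}$. A maximal run of consecutive integers in a set $S\subseteq\mathbb{Z}$ is a set $\{a,a+1,\dots,b\}\subseteq S$ with $a-1\notin S$ and $b+1\notin S$; its length is $b-a+1$. *)

theory Defs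
  imports Main
begin

definition is_partition :: "nat list \<Rightarrow> bool" where
  "is_partition mu \<longleftrightarrow> sorted_wrt (\<ge>) mu \<and> (\<forall>x\<in>set mu. 0 < x)"

definition conj_part :: "nat list \<Rightarrow> nat list" where
  "conj_part mu = map (\<lambda>j. length (filter (\<lambda>x. j \<le> x) mu)) [1..<Suc (if mu = [] then 0 else hd mu)]"

text \<open>beta-set: beta(mu) = {mu_i + m - i : 1 <= i <= m}, with 0-based index k = i - 1.\<close>
definition beta_set :: "nat list \<Rightarrow> int set" where
  "beta_set mu = {int (mu ! k) + int (length mu) - int (k + 1) | k. k < length mu}"

definition maximal_run :: "int set \<Rightarrow> int \<Rightarrow> int \<Rightarrow> bool" where
  "maximal_run S a b \<longleftrightarrow> a \<le> b \<and> {a..b} \<subseteq> S \<and> a - 1 \<notin> S \<and> b + 1 \<notin> S"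

end

theory Submission
  imports Defs
begin

lemma my_length_filter_mono:
  "(\<And>x. P x \<Longrightarrow> Q x) \<Longrightarrow> length (filter P xs) \<le> length (filter Q xs)"
  by (induction xs) auto

lemma runs_blocks_aux:
  fixes S T :: "int set" and p :: nat
  assumes S: "S = (\<Union>t\<in>T. {t..t + int p - 1})"
    and sep: "\<forall>t1\<in>T. \<forall>t2\<in>T. t1 < t2 \<longrightarrow> t1 + int p \<le> t2"
    and p: "0 < p"
  shows "\<forall>a b. nat (b - a) = n \<longrightarrow> a \<in> T \<longrightarrow> {a..b} \<subseteq> S \<longrightarrow> b + 1 \<notin> S \<longrightarrow> a \<le> b
          \<longrightarrow> int p dvd (b - a + 1)"
proof (induction n rule: less_induct)
  case (less n)
  show ?case
  proof (intro allI impI)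
    fix a b assume n: "nat (b - a) = n" and aT: "a \<in> T" and sub: "{a..b} \<subseteq> S"
      and b1: "b + 1 \<notin> S" and ab: "a \<le> b"
    have blk: "{a..a + int p - 1} \<subseteq> S" using aT S by blast
    consider "b < a + int p - 1" | "b = a + int p - 1" | "b \<ge> a + int p" by linarith
    then show "int p dvd (b - a + 1)"
    proof cases
      case 1
      then have "b + 1 \<in> S" using blk ab by auto
      then show ?thesis using b1 by blast
    next
      case 2 then show ?thesis by simp
    next
      case 3
      have "a + int p \<in> S" using sub 3 p by auto
      then obtain t where tT: "t \<in> T" and t: "t \<le> a + int p" "a + int p \<le> t + int p - 1"
        using S by auto
      have "t = a + int p"
      proof (rule ccontr)
        assume "t \<noteq> a + int p"
        then have "t < a + int p" using t by auto
        moreover have "a < t" using t by auto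
        ultimately show False using sep aT tT by force
      qed
      then have T2: "a + int p \<in> T" using tT by simp
      have "int p dvd (b - (a + int p) + 1)"
      proof -
        have lt: "nat (b - (a + int p)) < n" using n p 3 by auto
        have "{a + int p..b} \<subseteq> S" using sub by auto
        then show ?thesis using less.IH[OF lt] 3 T2 b1 by blast
      qed
      then have "int p dvd (b - (a + int p) + 1 + int p)" by (rule dvd_add) simp
      moreover have "b - (a + int p) + 1 + int p = b - a + 1" by simp
      ultimately show ?thesis by metis
    qed
  qed
qed

lemma runs_blocks:
  fixes S T :: "int set" and p :: nat
  assumes S: "S = (\<Union>t\<in>T. {t..t + int p - 1})"
    and sep: "\<forall>t1\<in>T. \<forall>t2\<in>T. t1 < t2 \<longrightarrow> t1 + int p \<le> t2"
    and p: "0 < p"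
    and mr: "maximal_run S a b"
  shows "int p dvd (b - a + 1)"
proof -
  from mr have ab: "a \<le> b" and sub: "{a..b} \<subseteq> S" and a1: "a - 1 \<notin> S" and b1: "b + 1 \<notin> S"
    unfolding maximal_run_def by auto
  have "a \<in> S" using sub ab by auto
  then obtain t where tT: "t \<in> T" and t: "t \<le> a" "a \<le> t + int p - 1" using S by auto
  have "t = a"
  proof (rule ccontr)
    assume "t \<noteq> a"
    then have "a - 1 \<in> {t..t + int p - 1}" using t by auto
    then show False using a1 S tT by blast
  qed
  then show ?thesis using runs_blocks_aux[OF S sep p] tT sub b1 ab by blast
qed

theorem lemma3p3:
  fixes p :: nat and lam :: "nat list"
  assumes "0 < p"
    and "is_partition lam"
    and "\<forall>x\<in>set lam. p dvd x"
  shows "\<forall>a b. maximal_run (beta_set (conj_part lam)) a b \<longrightarrow> int p dvd (b - a + 1)"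
proof (cases "lam = []")
  case True
  then have "beta_set (conj_part lam) = {}" by (simp add: conj_part_def beta_set_def)
  then show ?thesis by (simp add: maximal_run_def)
next
  case False
  define M where "M = hd lam"
  define c where "c = (\<lambda>k::nat. length (filter (\<lambda>x. Suc k \<le> x) lam))"
  have pM: "p dvd M" using assms(3) False M_def by (simp add: hd_in_set)
  have len: "length (conj_part lam) = M" using False by (simp add: conj_part_def M_def)
  have nth: "conj_part lam ! k = c k" if "k < M" for k
  proof -
    have "conj_part lam = map (\<lambda>j. length (filter (\<lambda>x. j \<le> x) lam)) [1..<Suc M]"
      using False by (simp add: conj_part_def M_def)
    also have "\<dots> ! k = length (filter (\<lambda>x. Suc k \<le> x) lam)"
      using that by (simp del: upt_Suc)
    finally show ?thesis by (simp add: c_def)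
  qed
  have cblk: "c (s * p + r) = c (s * p)" if "r < p" for s r
  proof -
    have "(Suc (s * p + r) \<le> x) = (Suc (s * p) \<le> x)" if "x \<in> set lam" for x
    proof -
      obtain q where q: "x = p * q" using assms(3) \<open>x \<in> set lam\<close> by blast
      have "(s * p < p * q) = (s * p + r < p * q)"
      proof
        assume "s * p < p * q"
        then have "s < q" by (simp add: mult.commute)
        then have "Suc s \<le> q" by simp
        then have "p * Suc s \<le> p * q" by (rule mult_le_mono2)
        then show "s * p + r < p * q" using \<open>r < p\<close> by (simp add: algebra_simps)
      qed linarith
      then show ?thesis using q by (simp add: Suc_le_eq)
    qed
    then show ?thesis unfolding c_def by (metis (no_types, lifting) filter_cong)
  qed
  have cmono: "c j \<le> c i" if "i \<le> j" for i j
    unfolding c_def by (rule my_length_filter_mono) (use that in auto)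
  define tt where "tt = (\<lambda>s::nat. int (c (s * p)) + int M - int (s * p) - int p)"
  define T where "T = tt ` {s. s * p < M}"
  have S: "beta_set (conj_part lam) = (\<Union>t\<in>T. {t..t + int p - 1})"
  proof (rule set_eqI)
    fix y
    show "y \<in> beta_set (conj_part lam) \<longleftrightarrow> y \<in> (\<Union>t\<in>T. {t..t + int p - 1})"
    proof
      assume "y \<in> beta_set (conj_part lam)"
      then obtain k where k: "k < M" and y: "y = int (c k) + int M - int (k + 1)"
        unfolding beta_set_def using len nth by auto
      define s where "s = k div p"
      define r where "r = k mod p"
      have kd: "k = s * p + r" unfolding s_def r_def by simp
      have r: "r < p" unfolding r_def using assms(1) by simp
      have sM: "s * p < M" using kd k by simp
      have "y = tt s + int p - 1 - int r" unfolding tt_def y kd using cblk[OF r] by simp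
      moreover have "tt s \<in> T" using sM T_def by blast
      moreover have "y \<in> {tt s..tt s + int p - 1}" using r calculation(1) by simp
      ultimately show "y \<in> (\<Union>t\<in>T. {t..t + int p - 1})" by blast
    next
      assume "y \<in> (\<Union>t\<in>T. {t..t + int p - 1})"
      then obtain s where sM: "s * p < M" and y: "tt s \<le> y" "y \<le> tt s + int p - 1"
        unfolding T_def by auto
      define r where "r = nat (tt s + int p - 1 - y)"
      have r: "r < p" using y unfolding r_def by auto
      have "s * p + p \<le> M"
      proof -
        obtain m where m: "M = p * m" using pM by blast
        have "s < m" using sM m by (simp add: mult.commute)
        then have "Suc s \<le> m" by simp
        then have "p * Suc s \<le> p * m" by (rule mult_le_mono2)
        then show ?thesis using m by (simp add: algebra_simps)
      qed
      then have k: "s * p + r < M" using r by simp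
      have "y = int (c (s * p + r)) + int M - int (s * p + r + 1)"
        using cblk[OF r] y unfolding r_def tt_def by simp
      then show "y \<in> beta_set (conj_part lam)"
        unfolding beta_set_def using len nth[OF k] k by (metis (mono_tags, lifting) mem_Collect_eq)
    qed
  qed
  have sep: "\<forall>t1\<in>T. \<forall>t2\<in>T. t1 < t2 \<longrightarrow> t1 + int p \<le> t2"
  proof (intro ballI impI)
    fix t1 t2 assume "t1 \<in> T" "t2 \<in> T" "t1 < t2"
    then obtain s1 s2 where t1: "t1 = tt s1" and t2: "t2 = tt s2" unfolding T_def by auto
    have gen: "tt j + int p \<le> tt i" if "i < j" for i j
    proof -
      have "c (j * p) \<le> c (i * p)" using cmono that by simp
      moreover have "i * p + p \<le> j * p"
      proof -
        have "Suc i \<le> j" using that by simp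
        then have "Suc i * p \<le> j * p" by (rule mult_le_mono1)
        then show ?thesis by simp
      qed
      ultimately show ?thesis unfolding tt_def by linarith
    qed
    consider "s1 < s2" | "s1 = s2" | "s2 < s1" by linarith
    then show "t1 + int p \<le> t2"
    proof cases
      case 1 then show ?thesis using gen[OF 1] \<open>t1 < t2\<close> t1 t2 assms(1) by simp
    next
      case 2 then show ?thesis using \<open>t1 < t2\<close> t1 t2 by simp
    next
      case 3 then show ?thesis using gen[OF 3] t1 t2 by simp
    qed
  qed
  show ?thesis using runs_blocks[OF S sep assms(1)] by blast
qed

end
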